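(* Let $N\ge1$. The maps $T_\Lambda$, $R_\sigma$, $M_\alpha$ ($\Lambda\subseteq P_N$, $\sigma\in S_N$, $\alpha\in\mathbb{C}^*$) all lie in $\mathfrak{G}_N:=\big[\mathrm{Aut}(\mathbb{D}_N)_\pi\cap\mathrm{N}(\mathfrak{M}_N)\big]\mathfrak{M}_N$. Furthermore, the set $G_N:=\mathfrak{T}_N\mathfrak{R}_N\mathfrak{M}_N$ equipped with the operation $$T_{\Lambda_1}R_{\sigma_1}M_{\alpha_1}\cdot T_{\Lambda_2}R_{\sigma_2}M_{\alpha_2}=T_{\Lambda_1\oplus\sigma_1(\Lambda_2)}R_{\sigma_1\sigma_2}M_{\alpha_1\alpha_2}$$ is a subgroup of $\mathfrak{G}_N$ isomorphic to $\big(\{\pm1\}^N\rtimes_\varphi S_N\big)\times\mathbb{C}^*$, where $\varphi_\sigma(\varepsilon_1,\dots,\varepsilon_N)=(\varepsilon_{\sigma^{-1}(1)},\dots,\varepsilon_{\sigma^{-1}(N)})$.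
   Context: $P_N=\{1,\dots,N\}$; vectors are functions on $P_N$, $v^{-1}[S]=\{\ell:v_\ell\in S\}$; $\mathrm{Tr}(v,\Lambda):=\sum_{\ell\in\Lambda}v_\ell$; $\oplus$ is symmetric difference. $\mathcal{C}:=\{z:\mathrm{Re}(z)>0\text{ or }z\in i\mathbb{R}_{>0}\}$. $\mathbb{D}_N:=\{(w,a,\theta)\in\mathbb{C}\times\mathbb{C}^N\times\mathbb{R}^N: a^{-1}[0]\subseteq\theta^{-1}[\mathbb{R}\smallsetminus\mathbb{Z}]\}$; $\pi(w,a,\theta):=w-\mathrm{Tr}(a,a^{-1}[-\mathcal{C}])$. $\mathrm{Aut}(\mathbb{D}_N)$ is the group of homeomorphisms of $\mathbb{D}_N$; $\mathrm{Aut}(\mathbb{D}_N)_\pi:=\{g:\pi\circ g=\pi\}$. $T_\Lambda(w,a,\theta):=(w-\mathrm{Tr}(a,\Lambda),a\,d(\Lambda),\theta\,d(\Lambda))$ with $d(\Lambda)$ diagonal with entry $-1$ at $\ell\in\Lambda$ and $1$ otherwise; $R_\sigma(w,a,\theta):=(w,a\,r(\sigma),\theta\,r(\sigma))$ with $r(\sigma)$ the matrix whose $\ell$-th column is the $\sigma^{-1}(\ell)$-th column of the identity; $M_\alpha(w,a,\theta):=(\alpha w,\alpha a,\theta)$. $\mathfrak{T}_N,\mathfrak{R}_N,\mathfrak{M}_N$ are the groups generated by the $T_\Lambda$, the $R_\sigma$, the $M_\alpha$ respectively; $\mathrm{N}(\mathfrak{M}_N)$ is the normalizer of $\mathfrak{M}_N$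 in $\mathrm{Aut}(\mathbb{D}_N)$. *)

theory Defs
  imports "HOL-Analysis.Analysis" "HOL-Algebra.Algebra" "HOL-Combinatorics.Permutations"
begin

type_synonym ('n) pt = "complex \<times> (complex^'n) \<times> (real^'n)"

text \<open>The index set P_N is the finite type 'n (N = CARD('n) \<ge> 1).\<close>

definition Tr :: "complex^'n \<Rightarrow> 'n set \<Rightarrow> complex" where
  "Tr v L = (\<Sum>l\<in>L. v $ l)"

definition Ccone :: "complex set" where
  "Ccone = {z. Re z > 0 \<or> (Re z = 0 \<and> Im z > 0)}"

definition DN :: "('n::finite) pt set" where
  "DN = {(w, a, \<theta>). \<forall>l. a $ l = 0 \<longrightarrow> \<theta> $ l \<notin> \<int>}"

definition piN :: "('n::finite) pt \<Rightarrow> complex" where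
  "piN = (\<lambda>(w, a, \<theta>). w - Tr a {l. a $ l \<in> uminus ` Ccone})"

definition symdiff :: "'a set \<Rightarrow> 'a set \<Rightarrow> 'a set" where
  "symdiff A B = (A - B) \<union> (B - A)"

definition Tmap :: "'n set \<Rightarrow> ('n::finite) pt \<Rightarrow> 'n pt" where
  "Tmap L = (\<lambda>(w, a, \<theta>). (w - Tr a L,
       \<chi> l. (if l \<in> L then -1 else 1) * a $ l,
       \<chi> l. (if l \<in> L then -1 else 1) * \<theta> $ l))"

definition Rmap :: "('n \<Rightarrow> 'n) \<Rightarrow> ('n::finite) pt \<Rightarrow> 'n pt" where
  "Rmap \<sigma> = (\<lambda>(w, a, \<theta>). (w, \<chi> l. a $ (inv_into UNIV \<sigma> l), \<chi> l. \<theta> $ (inv_into UNIV \<sigma> l)))"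

definition Mmap :: "complex \<Rightarrow> ('n::finite) pt \<Rightarrow> 'n pt" where
  "Mmap \<alpha> = (\<lambda>(w, a, \<theta>). (\<alpha> * w, \<chi> l. \<alpha> * a $ l, \<theta>))"

definition Aut :: "(('n::finite) pt \<Rightarrow> 'n pt) set" where
  "Aut = {g. g \<in> extensional DN \<and> (\<exists>h. homeomorphism DN DN g h)}"

definition AutGrp :: "(('n::finite) pt \<Rightarrow> 'n pt) monoid" where
  "AutGrp = \<lparr>carrier = Aut, mult = (\<lambda>f g. compose DN f g), one = restrict id DN\<rparr>"

definition Aut_pi :: "(('n::finite) pt \<Rightarrow> 'n pt) set" where
  "Aut_pi = {g \<in> Aut. \<forall>x\<in>DN. piN (g x) = piN x}"

definition frakT :: "(('n::finite) pt \<Rightarrow> 'n pt) set" where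
  "frakT = generate AutGrp {restrict (Tmap L) DN | L. True}"

definition frakR :: "(('n::finite) pt \<Rightarrow> 'n pt) set" where
  "frakR = generate AutGrp {restrict (Rmap \<sigma>) DN | \<sigma>. \<sigma> permutes (UNIV::'n set)}"

definition frakM :: "(('n::finite) pt \<Rightarrow> 'n pt) set" where
  "frakM = generate AutGrp {restrict (Mmap \<alpha>) DN | \<alpha>. \<alpha> \<noteq> 0}"

definition frakG :: "(('n::finite) pt \<Rightarrow> 'n pt) set" where
  "frakG = (Aut_pi \<inter> normalizer AutGrp frakM) <#>\<^bsub>AutGrp\<^esub> frakM"

definition GN :: "(('n::finite) pt \<Rightarrow> 'n pt) set" where
  "GN = (frakT <#>\<^bsub>AutGrp\<^esub> frakR) <#>\<^bsub>AutGrp\<^esub> frakM"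

definition TRM :: "'n set \<Rightarrow> ('n \<Rightarrow> 'n) \<Rightarrow> complex \<Rightarrow> ('n::finite) pt \<Rightarrow> 'n pt" where
  "TRM L \<sigma> \<alpha> = restrict (Tmap L \<circ> Rmap \<sigma> \<circ> Mmap \<alpha>) DN"

definition signperm_grp :: "(('n::finite \<Rightarrow> int) \<times> ('n \<Rightarrow> 'n)) monoid" where
  "signperm_grp = \<lparr>carrier = {(\<epsilon>, \<sigma>). (\<forall>l. \<epsilon> l \<in> {1, -1}) \<and> \<sigma> permutes (UNIV::'n set)},
     mult = (\<lambda>(\<epsilon>1, \<sigma>1) (\<epsilon>2, \<sigma>2). (\<lambda>l. \<epsilon>1 l * \<epsilon>2 (inv_into UNIV \<sigma>1 l), \<sigma>1 \<circ> \<sigma>2)),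
     one = (\<lambda>l. 1, id)\<rparr>"

definition Cstar_grp :: "complex monoid" where
  "Cstar_grp = \<lparr>carrier = UNIV - {0}, mult = (*), one = 1\<rparr>"

end

theory Submission
  imports Defs
begin


lemma Tmap_eval: "Tmap L (w, a, th) = (w - Tr a L,
       \<chi> l. (if l \<in> L then -1 else 1) * a $ l,
       \<chi> l. (if l \<in> L then -1 else 1) * th $ l)"
  by (simp add: Tmap_def)

lemma Rmap_eval: "Rmap s (w, a, th) = (w, \<chi> l. a $ (inv_into UNIV s l), \<chi> l. th $ (inv_into UNIV s l))"
  by (simp add: Rmap_def)

lemma Mmap_eval: "Mmap c (w, a, th) = (c * w, \<chi> l. c * a $ l, th)"
  by (simp add: Mmap_def)

lemma Tr_signs: "Tr (\<chi> l. (if l \<in> B then -1 else 1) * a $ l) A = Tr a (A - B) - Tr a (A \<inter> B)"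
proof -
  have "Tr (\<chi> l. (if l \<in> B then -1 else 1) * a $ l) A
      = (\<Sum>l\<in>A \<inter> B. (if l \<in> B then -1 else 1) * a $ l) + (\<Sum>l\<in>A - B. (if l \<in> B then -1 else 1) * a $ l)"
    unfolding Tr_def by (simp add: sum.Int_Diff[of A _ B])
  also have "\<dots> = - Tr a (A \<inter> B) + Tr a (A - B)"
    unfolding Tr_def by (simp add: sum_negf)
  finally show ?thesis by simp
qed

lemma T_T: "Tmap A (Tmap B p) = Tmap (symdiff A B) p"
proof -
  obtain w a th where p: "p = (w, a, th)" by (cases p) auto
  have sB: "Tr a B = Tr a (B - A) + Tr a (A \<inter> B)"
    unfolding Tr_def using sum.Int_Diff[of B "\<lambda>l. a $ l" A] by (simp add: Int_commute add.commute)
  have sd: "Tr a (symdiff A B) = Tr a (A - B) + Tr a (B - A)"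
    unfolding Tr_def symdiff_def by (rule sum.union_disjoint) auto
  have mem: "\<And>l. (l \<in> symdiff A B) = (l \<in> A \<longleftrightarrow> l \<notin> B)" unfolding symdiff_def by auto
  show ?thesis unfolding p Tmap_eval
    by (auto simp: Tr_signs sB sd vec_eq_iff mem)
qed

lemma T_empty: "Tmap {} p = p"
  by (cases p) (simp add: Tmap_eval Tr_def vec_eq_iff)

lemma R_id: "Rmap id p = p"
  by (cases p) (simp add: Rmap_eval vec_eq_iff)

lemma M_one: "Mmap 1 p = p"
  by (cases p) (simp add: Mmap_eval vec_eq_iff)

lemma M_M: "Mmap c (Mmap d p) = Mmap (c * d) p"
  by (cases p) (simp add: Mmap_eval vec_eq_iff)

lemma M_T: "Mmap c (Tmap L p) = Tmap L (Mmap c p)"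
  by (cases p) (simp add: Mmap_eval Tmap_eval vec_eq_iff Tr_def sum_distrib_left right_diff_distrib)

lemma M_R: "Mmap c (Rmap s p) = Rmap s (Mmap c p)"
  by (cases p) (simp add: Mmap_eval Rmap_eval vec_eq_iff)

lemma R_R: assumes "s1 permutes (UNIV::'n::finite set)" "s2 permutes (UNIV::'n set)"
  shows "Rmap s1 (Rmap s2 (p::'n pt)) = Rmap (s1 \<circ> s2) p"
proof -
  have "inv_into UNIV (s1 \<circ> s2) = inv_into UNIV s2 \<circ> inv_into UNIV s1"
    using o_inv_distrib[of s1 s2] assms permutes_bij by blast
  then show ?thesis by (cases p) (simp add: Rmap_eval vec_eq_iff)
qed

lemma R_T: assumes "s permutes (UNIV::'n::finite set)"
  shows "Rmap s (Tmap L (p::'n pt)) = Tmap (s ` L) (Rmap s p)"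
proof -
  obtain w a th where p: "p = (w, a, th)" by (cases p) auto
  have mem: "\<And>l. (l \<in> s ` L) = (inv_into UNIV s l \<in> L)"
    using assms by (metis image_iff permutes_inverses(1) permutes_inverses(2))
  have inj: "inj_on s L" using assms permutes_inj by (metis inj_on_subset subset_UNIV)
  have "Tr (\<chi> l. a $ inv_into UNIV s l) (s ` L) = Tr a L"
    unfolding Tr_def using sum.reindex[OF inj, of "\<lambda>l. a $ inv_into UNIV s l"] assms
    by (simp add: permutes_inverses(2))
  then show ?thesis unfolding p Tmap_eval Rmap_eval by (simp add: vec_eq_iff mem)
qed

lemma DN_iff: "((w, a, th) \<in> DN) = (\<forall>l. a $ l = 0 \<longrightarrow> th $ l \<notin> \<int>)"
  by (simp add: DN_def)

lemma T_DN: "p \<in> DN \<Longrightarrow> Tmap L p \<in> DN"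
  by (cases p) (auto simp: Tmap_eval DN_iff split: if_splits)

lemma R_DN: "p \<in> DN \<Longrightarrow> Rmap s p \<in> DN"
  by (cases p) (auto simp: Rmap_eval DN_iff)

lemma M_DN: "c \<noteq> 0 \<Longrightarrow> p \<in> DN \<Longrightarrow> Mmap c p \<in> DN"
  by (cases p) (auto simp: Mmap_eval DN_iff)

lemma T_cont: "continuous_on UNIV (Tmap L :: ('n::finite) pt \<Rightarrow> 'n pt)"
proof -
  have e: "Tmap L = (\<lambda>p::'n pt. (fst p - (\<Sum>l\<in>L. fst (snd p) $ l),
       \<chi> l. (if l \<in> L then -1 else 1) * fst (snd p) $ l,
       \<chi> l. (if l \<in> L then -1 else 1) * snd (snd p) $ l))"
    by (auto simp: fun_eq_iff Tmap_eval Tr_def)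
  show ?thesis unfolding e
    by (intro continuous_intros continuous_on_vec_lambda) 
qed

lemma R_cont: "continuous_on UNIV (Rmap s :: ('n::finite) pt \<Rightarrow> 'n pt)"
proof -
  have e: "Rmap s = (\<lambda>p::'n pt. (fst p,
       \<chi> l. fst (snd p) $ inv_into UNIV s l,
       \<chi> l. snd (snd p) $ inv_into UNIV s l))"
    by (auto simp: fun_eq_iff Rmap_eval)
  show ?thesis unfolding e
    by (intro continuous_intros continuous_on_vec_lambda) 
qed

lemma M_cont: "continuous_on UNIV (Mmap c :: ('n::finite) pt \<Rightarrow> 'n pt)"
proof -
  have e: "Mmap c = (\<lambda>p::'n pt. (c * fst p,
       \<chi> l. c * fst (snd p) $ l, snd (snd p)))"
    by (auto simp: fun_eq_iff Mmap_eval)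
  show ?thesis unfolding e
    by (intro continuous_intros continuous_on_vec_lambda) 
qed

definition fneg :: "complex \<Rightarrow> complex" where
  "fneg z = (if z \<in> uminus ` Ccone then z else 0)"

lemma Tr_neg: "Tr a {l. a $ l \<in> uminus ` Ccone} = (\<Sum>l\<in>UNIV. fneg (a $ l))"
  unfolding Tr_def fneg_def by (simp add: sum.inter_filter[symmetric])

lemma Tr_ind: "Tr a L = (\<Sum>l\<in>UNIV. if l \<in> L then a $ l else 0)"
  unfolding Tr_def by (simp add: sum.inter_filter[symmetric])

lemma piN_eval: "piN (w, a, th) = w - (\<Sum>l\<in>UNIV. fneg (a $ l))"
  by (simp add: piN_def Tr_neg)

lemma fneg_key: "z + fneg (- z) = fneg z"
proof -
  have m: "\<And>u. (u \<in> uminus ` Ccone) = (- u \<in> Ccone)" by force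
  show ?thesis unfolding fneg_def m by (auto simp: Ccone_def complex_eq_iff)
qed

lemma T_pi: "piN (Tmap L p) = piN p"
proof -
  obtain w a th where p: "p = (w, a, th)" by (cases p) auto
  have "\<And>l. (if l \<in> L then a $ l else 0) + fneg ((if l \<in> L then -1 else 1) * a $ l) = fneg (a $ l)"
    using fneg_key by simp
  then have "(\<Sum>l\<in>UNIV. (if l \<in> L then a $ l else 0)) + (\<Sum>l\<in>UNIV. fneg ((if l \<in> L then -1 else 1) * a $ l))
     = (\<Sum>l\<in>UNIV. fneg (a $ l))" by (simp add: sum.distrib[symmetric])
  then show ?thesis unfolding p Tmap_eval piN_eval Tr_ind by (simp add: algebra_simps)
qed

lemma R_pi: assumes "s permutes (UNIV::'n::finite set)" shows "piN (Rmap s (p::'n pt)) = piN p"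
proof -
  obtain w a th where p: "p = (w, a, th)" by (cases p) auto
  have "(\<Sum>l\<in>UNIV. fneg (a $ l)) = (\<Sum>l\<in>UNIV. fneg (a $ inv_into UNIV s l))"
    using sum.permute[OF permutes_inv[OF assms], of "\<lambda>l. fneg (a $ l)"] by (simp add: o_def)
  then show ?thesis unfolding p Rmap_eval piN_eval by simp
qed


lemma Aut_iff: "(g \<in> Aut) = (g \<in> extensional DN \<and> (\<exists>h. homeomorphism DN DN g h))"
  by (simp add: Aut_def)

lemma Aut_maps: "g \<in> Aut \<Longrightarrow> x \<in> DN \<Longrightarrow> g x \<in> DN"
  unfolding Aut_def homeomorphism_def by blast

lemma AutGrp_simps [simp]: "carrier AutGrp = Aut" "mult AutGrp = (\<lambda>f g. compose DN f g)"
  "one AutGrp = restrict id DN"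
  by (simp_all add: AutGrp_def)

lemma group_AutGrp: "group (AutGrp :: (('n::finite) pt \<Rightarrow> 'n pt) monoid)"
proof (rule groupI)
  fix x y :: "'n pt \<Rightarrow> 'n pt"
  assume x: "x \<in> carrier AutGrp" and y: "y \<in> carrier AutGrp"
  from x obtain hx where hx: "homeomorphism DN DN x hx" by (auto simp: Aut_def)
  from y obtain hy where hy: "homeomorphism DN DN y hy" by (auto simp: Aut_def)
  have "homeomorphism DN DN (x \<circ> y) (hy \<circ> hx)" by (rule homeomorphism_compose[OF hy hx])
  then have "homeomorphism DN DN (compose DN x y) (hy \<circ> hx)"
    by (rule homeomorphism_cong) (auto simp: compose_def)
  then show "x \<otimes>\<^bsub>AutGrp\<^esub> y \<in> carrier AutGrp" by (auto simp: Aut_def)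
next
  show "\<one>\<^bsub>AutGrp\<^esub> \<in> carrier AutGrp"
  proof -
    have "homeomorphism DN DN (restrict id DN) (\<lambda>a. a)"
      by (rule homeomorphism_cong[OF homeomorphism_ident]) auto
    then show ?thesis by (auto simp: Aut_def)
  qed
next
  fix x y z :: "'n pt \<Rightarrow> 'n pt"
  assume x: "x \<in> carrier AutGrp" and y: "y \<in> carrier AutGrp" and z: "z \<in> carrier AutGrp"
  have "z \<in> DN \<rightarrow> DN" using z Aut_maps by auto
  then show "x \<otimes>\<^bsub>AutGrp\<^esub> y \<otimes>\<^bsub>AutGrp\<^esub> z = x \<otimes>\<^bsub>AutGrp\<^esub> (y \<otimes>\<^bsub>AutGrp\<^esub> z)"
    using compose_assoc[of z DN DN x y] by simp
next
  fix x :: "'n pt \<Rightarrow> 'n pt"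
  assume x: "x \<in> carrier AutGrp"
  then show "\<one>\<^bsub>AutGrp\<^esub> \<otimes>\<^bsub>AutGrp\<^esub> x = x"
    using Aut_maps[of x] by (auto simp: compose_def Aut_def fun_eq_iff extensional_def)
next
  fix x :: "'n pt \<Rightarrow> 'n pt"
  assume x: "x \<in> carrier AutGrp"
  from x obtain hx where hx: "homeomorphism DN DN x hx" by (auto simp: Aut_def)
  have "homeomorphism DN DN (restrict hx DN) x"
    by (rule homeomorphism_cong[OF homeomorphism_symD[OF hx]]) auto
  then have "restrict hx DN \<in> carrier AutGrp" by (auto simp: Aut_def)
  moreover have "restrict hx DN \<otimes>\<^bsub>AutGrp\<^esub> x = \<one>\<^bsub>AutGrp\<^esub>"
    using hx Aut_maps[of x] x by (auto simp: compose_def homeomorphism_def fun_eq_iff)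
  ultimately show "\<exists>y\<in>carrier AutGrp. y \<otimes>\<^bsub>AutGrp\<^esub> x = \<one>\<^bsub>AutGrp\<^esub>" by blast
qed

definition F :: "'n set \<Rightarrow> ('n \<Rightarrow> 'n) \<Rightarrow> complex \<Rightarrow> ('n::finite) pt \<Rightarrow> 'n pt" where
  "F L s c p = Tmap L (Rmap s (Mmap c p))"

lemma TRM_F: "TRM L s c = restrict (F L s c) DN"
  unfolding TRM_def by (intro restrict_ext) (simp add: F_def)

lemma F_comp:
  assumes "s1 permutes (UNIV::'n::finite set)" "s2 permutes (UNIV::'n set)"
  shows "F L1 s1 c1 (F L2 s2 c2 (p::'n pt)) = F (symdiff L1 (s1 ` L2)) (s1 \<circ> s2) (c1 * c2) p"
proof -
  have "F L1 s1 c1 (F L2 s2 c2 p) = Tmap L1 (Rmap s1 (Mmap c1 (Tmap L2 (Rmap s2 (Mmap c2 p)))))"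
    by (simp add: F_def)
  also have "\<dots> = Tmap L1 (Rmap s1 (Tmap L2 (Rmap s2 (Mmap c1 (Mmap c2 p)))))"
    by (simp only: M_T M_R)
  also have "\<dots> = Tmap L1 (Tmap (s1 ` L2) (Rmap s1 (Rmap s2 (Mmap (c1 * c2) p))))"
    by (simp only: M_M R_T[OF assms(1)])
  also have "\<dots> = F (symdiff L1 (s1 ` L2)) (s1 \<circ> s2) (c1 * c2) p"
    by (simp only: T_T R_R[OF assms] F_def)
  finally show ?thesis .
qed

lemma F_DN: "c \<noteq> 0 \<Longrightarrow> p \<in> DN \<Longrightarrow> F L s c p \<in> DN"
  unfolding F_def by (intro T_DN R_DN M_DN)

lemma F_id: "F {} id 1 p = p"
  unfolding F_def by (simp add: T_empty R_id M_one)

lemma F_cont: "continuous_on UNIV (F L s c :: ('n::finite) pt \<Rightarrow> 'n pt)"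
proof -
  have "F L s c = Tmap L \<circ> Rmap s \<circ> Mmap c" by (simp add: fun_eq_iff F_def)
  then show ?thesis
    using continuous_on_compose[OF continuous_on_compose[OF M_cont continuous_on_subset[OF R_cont subset_UNIV]]
       continuous_on_subset[OF T_cont subset_UNIV]]
    by (simp add: o_assoc)
qed

lemma perm_inv_image: "s permutes (UNIV::'n set) \<Longrightarrow> s ` (inv_into UNIV s ` L) = L"
  by (simp add: image_comp permutes_inv_o(1))

lemma symdiff_self: "symdiff L L = {}" by (simp add: symdiff_def)

lemma F_inv1:
  assumes "s permutes (UNIV::'n::finite set)" "c \<noteq> 0"
  shows "F L s c (F (inv_into UNIV s ` L) (inv_into UNIV s) (1/c) (p::'n pt)) = p"
proof -
  have "F L s c (F (inv_into UNIV s ` L) (inv_into UNIV s) (1/c) p)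
     = F (symdiff L (s ` (inv_into UNIV s ` L))) (s \<circ> inv_into UNIV s) (c * (1/c)) p"
    by (rule F_comp[OF assms(1) permutes_inv[OF assms(1)]])
  also have "\<dots> = F {} id 1 p"
    using assms by (simp only: perm_inv_image[OF assms(1)] symdiff_self permutes_inv_o(1)[OF assms(1)]) simp
  finally show ?thesis by (simp only: F_id)
qed

lemma F_inv2:
  assumes "s permutes (UNIV::'n::finite set)" "c \<noteq> 0"
  shows "F (inv_into UNIV s ` L) (inv_into UNIV s) (1/c) (F L s c (p::'n pt)) = p"
proof -
  have e: "inv_into UNIV s ` s ` L = L"
    using assms by (simp add: image_comp permutes_inv_o(2))
  have "F (inv_into UNIV s ` L) (inv_into UNIV s) (1/c) (F L s c p)
     = F (symdiff (inv_into UNIV s ` L) (inv_into UNIV s ` L)) (inv_into UNIV s \<circ> s) ((1/c) * c) p"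
    using F_comp[OF permutes_inv[OF assms(1)] assms(1), of "inv_into UNIV s ` L" "1/c" L c p] e by simp
  also have "\<dots> = F {} id 1 p"
    using assms by (simp only: symdiff_self permutes_inv_o(2)[OF assms(1)]) simp
  finally show ?thesis by (simp only: F_id)
qed

lemma TRM_Aut:
  assumes "s permutes (UNIV::'n::finite set)" "c \<noteq> 0"
  shows "TRM L s c \<in> (Aut :: ('n pt \<Rightarrow> 'n pt) set)"
proof -
  let ?G = "F (inv_into UNIV s ` L) (inv_into UNIV s) (1/c) :: 'n pt \<Rightarrow> 'n pt"
  have "homeomorphism DN DN (F L s c) ?G"
  proof (rule homeomorphismI)
    show "continuous_on DN (F L s c)" by (rule continuous_on_subset[OF F_cont subset_UNIV])
    show "continuous_on DN ?G" by (rule continuous_on_subset[OF F_cont subset_UNIV])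
    show "F L s c ` DN \<subseteq> DN" using F_DN[OF assms(2)] by blast
    have "1/c \<noteq> 0" using assms by simp
    then show "?G ` DN \<subseteq> DN" using F_DN by blast
    show "\<And>x. x \<in> DN \<Longrightarrow> ?G (F L s c x) = x" by (rule F_inv2[OF assms])
    show "\<And>x. x \<in> DN \<Longrightarrow> F L s c (?G x) = x" by (rule F_inv1[OF assms])
  qed
  then have "homeomorphism DN DN (TRM L s c) ?G"
    by (rule homeomorphism_cong) (auto simp: TRM_F)
  then show ?thesis by (auto simp: Aut_def TRM_F)
qed

lemma TRM_comp:
  assumes "s1 permutes (UNIV::'n::finite set)" "s2 permutes (UNIV::'n set)" "c2 \<noteq> 0"
  shows "compose DN (TRM L1 s1 c1) (TRM L2 s2 c2) = (TRM (symdiff L1 (s1 ` L2)) (s1 \<circ> s2) (c1 * c2) :: 'n pt \<Rightarrow> 'n pt)"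
  using assms by (auto simp: compose_def TRM_F fun_eq_iff F_DN F_comp)

lemma TRM_one: "TRM {} id 1 = \<one>\<^bsub>AutGrp\<^esub>"
  by (simp add: TRM_F F_id fun_eq_iff)

lemma TRM_inv:
  assumes "s permutes (UNIV::'n::finite set)" "c \<noteq> 0"
  shows "inv\<^bsub>AutGrp\<^esub> (TRM L s c :: 'n pt \<Rightarrow> 'n pt) = TRM (inv_into UNIV s ` L) (inv_into UNIV s) (1/c)"
proof (rule group.inv_equality[OF group_AutGrp])
  show "TRM (inv_into UNIV s ` L) (inv_into UNIV s) (1 / c) \<otimes>\<^bsub>AutGrp\<^esub> TRM L s c = \<one>\<^bsub>AutGrp\<^esub>"
    using assms by (simp add: TRM_comp permutes_inv image_comp permutes_inv_o symdiff_self TRM_one)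
qed (simp_all add: TRM_Aut permutes_inv assms)



lemma symdiff_empty [simp]: "symdiff L {} = L" "symdiff {} L = L"
  by (auto simp: symdiff_def)

lemma TRM_T: "restrict (Tmap L) DN = TRM L id 1"
  unfolding TRM_F by (intro restrict_ext) (simp add: F_def R_id M_one)

lemma TRM_R: "restrict (Rmap s) DN = TRM {} s 1"
  unfolding TRM_F by (intro restrict_ext) (simp add: F_def T_empty M_one)

lemma TRM_M: "restrict (Mmap c) DN = TRM {} id c"
  unfolding TRM_F by (intro restrict_ext) (simp add: F_def R_id T_empty)

lemma AutGrp_mult: "x \<otimes>\<^bsub>AutGrp\<^esub> y = compose DN x y" by simp

lemma sub_T: "subgroup {TRM L id 1 | L. True} (AutGrp :: (('n::finite) pt \<Rightarrow> 'n pt) monoid)"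
proof (rule group.subgroupI[OF group_AutGrp])
  show "{TRM L id 1 | L. True} \<subseteq> carrier (AutGrp :: ('n pt \<Rightarrow> 'n pt) monoid)"
    using TRM_Aut[of id 1] permutes_id by auto
  show "{TRM L id 1 | L. True} \<noteq> ({} :: ('n pt \<Rightarrow> 'n pt) set)" by blast
  fix a :: "'n pt \<Rightarrow> 'n pt" assume "a \<in> {TRM L id 1 | L. True}"
  then obtain L where a: "a = TRM L id 1" by blast
  show "inv\<^bsub>AutGrp\<^esub> a \<in> {TRM L id 1 | L. True}"
    unfolding a by (auto simp add: TRM_inv permutes_id)
next
  fix a b :: "'n pt \<Rightarrow> 'n pt" assume "a \<in> {TRM L id 1 | L. True}" "b \<in> {TRM L id 1 | L. True}"
  then obtain L1 L2 where a: "a = TRM L1 id 1" and b: "b = TRM L2 id 1" by blast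
  show "a \<otimes>\<^bsub>AutGrp\<^esub> b \<in> {TRM L id 1 | L. True}"
    unfolding a b AutGrp_mult by (auto simp add: TRM_comp permutes_id)
qed

lemma sub_R: "subgroup {TRM {} s 1 | s. s permutes UNIV} (AutGrp :: (('n::finite) pt \<Rightarrow> 'n pt) monoid)"
proof (rule group.subgroupI[OF group_AutGrp])
  show "{TRM {} s 1 | s. s permutes UNIV} \<subseteq> carrier (AutGrp :: ('n pt \<Rightarrow> 'n pt) monoid)"
    by (auto intro!: TRM_Aut)
  show "{TRM {} s 1 | s. s permutes UNIV} \<noteq> ({} :: ('n pt \<Rightarrow> 'n pt) set)" using permutes_id by blast
  fix a :: "'n pt \<Rightarrow> 'n pt" assume "a \<in> {TRM {} s 1 | s. s permutes UNIV}"
  then obtain s where a: "a = TRM {} s 1" and s: "s permutes UNIV" by blast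
  show "inv\<^bsub>AutGrp\<^esub> a \<in> {TRM {} s 1 | s. s permutes UNIV}"
    unfolding a using s by (auto simp add: TRM_inv permutes_inv)
next
  fix a b :: "'n pt \<Rightarrow> 'n pt" assume "a \<in> {TRM {} s 1 | s. s permutes UNIV}" "b \<in> {TRM {} s 1 | s. s permutes UNIV}"
  then obtain s1 s2 where a: "a = TRM {} s1 1" and b: "b = TRM {} s2 1" and s: "s1 permutes UNIV" "s2 permutes UNIV" by blast
  show "a \<otimes>\<^bsub>AutGrp\<^esub> b \<in> {TRM {} s 1 | s. s permutes UNIV}"
    unfolding a b AutGrp_mult using s by (auto simp add: TRM_comp permutes_compose)
qed

lemma sub_M: "subgroup {TRM {} id c | c. c \<noteq> 0} (AutGrp :: (('n::finite) pt \<Rightarrow> 'n pt) monoid)"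
proof (rule group.subgroupI[OF group_AutGrp])
  show "{TRM {} id c | c. c \<noteq> 0} \<subseteq> carrier (AutGrp :: ('n pt \<Rightarrow> 'n pt) monoid)"
    by (auto intro!: TRM_Aut permutes_id)
  show "{TRM {} id c | c. c \<noteq> 0} \<noteq> ({} :: ('n pt \<Rightarrow> 'n pt) set)" by (metis (mono_tags, lifting) empty_Collect_eq one_neq_zero)
  fix a :: "'n pt \<Rightarrow> 'n pt" assume "a \<in> {TRM {} id c | c. c \<noteq> 0}"
  then obtain c where a: "a = TRM {} id c" and c: "c \<noteq> 0" by blast
  show "inv\<^bsub>AutGrp\<^esub> a \<in> {TRM {} id c | c. c \<noteq> 0}"
    unfolding a using c by (auto simp add: TRM_inv permutes_id)
next
  fix a b :: "'n pt \<Rightarrow> 'n pt" assume "a \<in> {TRM {} id c | c. c \<noteq> 0}" "b \<in> {TRM {} id c | c. c \<noteq> 0}"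
  then obtain c1 c2 where a: "a = TRM {} id c1" and b: "b = TRM {} id c2" and c: "c1 \<noteq> 0" "c2 \<noteq> 0" by blast
  show "a \<otimes>\<^bsub>AutGrp\<^esub> b \<in> {TRM {} id c | c. c \<noteq> 0}"
    unfolding a b AutGrp_mult using c by (auto simp add: TRM_comp permutes_id)
qed

lemma sub_G: "subgroup {TRM L s c | L s c. s permutes UNIV \<and> c \<noteq> 0} (AutGrp :: (('n::finite) pt \<Rightarrow> 'n pt) monoid)"
proof (rule group.subgroupI[OF group_AutGrp])
  show "{TRM L s c | L s c. s permutes UNIV \<and> c \<noteq> 0} \<subseteq> carrier (AutGrp :: ('n pt \<Rightarrow> 'n pt) monoid)"
    by (auto intro!: TRM_Aut)
  show "{TRM L s c | L s c. s permutes UNIV \<and> c \<noteq> 0} \<noteq> ({} :: ('n pt \<Rightarrow> 'n pt) set)"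
    using permutes_id by blast
  fix a :: "'n pt \<Rightarrow> 'n pt" assume "a \<in> {TRM L s c | L s c. s permutes UNIV \<and> c \<noteq> 0}"
  then obtain L s c where a: "a = TRM L s c" and s: "s permutes UNIV" "c \<noteq> 0" by blast
  show "inv\<^bsub>AutGrp\<^esub> a \<in> {TRM L s c | L s c. s permutes UNIV \<and> c \<noteq> 0}"
    unfolding a TRM_inv[OF s] using s permutes_inv[OF s(1)] by fastforce
next
  fix a b :: "'n pt \<Rightarrow> 'n pt" assume "a \<in> {TRM L s c | L s c. s permutes UNIV \<and> c \<noteq> 0}" "b \<in> {TRM L s c | L s c. s permutes UNIV \<and> c \<noteq> 0}"
  then obtain L1 L2 s1 s2 c1 c2 where a: "a = TRM L1 s1 c1" and b: "b = TRM L2 s2 c2"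
    and s: "s1 permutes UNIV" "s2 permutes UNIV" "c1 \<noteq> 0" "c2 \<noteq> 0" by blast
  show "a \<otimes>\<^bsub>AutGrp\<^esub> b \<in> {TRM L s c | L s c. s permutes UNIV \<and> c \<noteq> 0}"
    unfolding a b AutGrp_mult TRM_comp[OF s(1,2,4)] using s permutes_compose[OF s(2,1)] by fastforce
qed

lemma gen_eq: "group G \<Longrightarrow> subgroup H G \<Longrightarrow> generate G H = H"
  using group.generate_subgroup_incl[of G H H] generate.incl[of _ H G] by blast

lemma frakT_eq: "frakT = {TRM L id 1 | L. True}"
proof -
  have e: "{restrict (Tmap L) DN | L. True} = {TRM L id 1 | L. True}" by (simp add: TRM_T)
  show ?thesis unfolding frakT_def e by (rule gen_eq[OF group_AutGrp sub_T])
qed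

lemma frakR_eq: "frakR = {TRM {} s 1 | s. s permutes UNIV}"
proof -
  have e: "{restrict (Rmap s) DN | s. s permutes UNIV} = {TRM {} s 1 | s. s permutes UNIV}" by (simp add: TRM_R)
  show ?thesis unfolding frakR_def e by (rule gen_eq[OF group_AutGrp sub_R])
qed

lemma frakM_eq: "frakM = {TRM {} id c | c. c \<noteq> 0}"
proof -
  have e: "{restrict (Mmap c) DN | c. c \<noteq> 0} = {TRM {} id c | c. c \<noteq> 0}" by (simp add: TRM_M)
  show ?thesis unfolding frakM_def e by (rule gen_eq[OF group_AutGrp sub_M])
qed


lemma GN_eq: "(GN :: (('n::finite) pt \<Rightarrow> 'n pt) set) = {TRM L s c | L s c. s permutes UNIV \<and> c \<noteq> 0}"
proof -
  have e: "compose DN (compose DN (TRM L id 1) (TRM {} s 1)) (TRM {} id c) = (TRM L s c :: 'n pt \<Rightarrow> 'n pt)"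
    if "s permutes UNIV" "c \<noteq> 0" for L s and c :: complex
    using that by (simp add: TRM_comp permutes_id)
  show ?thesis
  proof (intro equalityI subsetI)
    fix g :: "'n pt \<Rightarrow> 'n pt" assume "g \<in> GN"
    then obtain L s c where "g = compose DN (compose DN (TRM L id 1) (TRM {} s 1)) (TRM {} id c)"
      "s permutes UNIV" "c \<noteq> 0"
      unfolding GN_def frakT_eq frakR_eq frakM_eq set_mult_def AutGrp_mult by blast
    then show "g \<in> {TRM L s c | L s c. s permutes UNIV \<and> c \<noteq> 0}" using e by blast
  next
    fix g :: "'n pt \<Rightarrow> 'n pt" assume "g \<in> {TRM L s c | L s c. s permutes UNIV \<and> c \<noteq> 0}"
    then obtain L s c where g: "g = TRM L s c" "s permutes UNIV" "c \<noteq> 0" by blast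
    show "g \<in> GN"
      unfolding GN_def frakT_eq frakR_eq frakM_eq set_mult_def AutGrp_mult
      using e[OF g(2,3), of L] g by blast
  qed
qed

lemma (in group) conj_commuting:
  assumes "g \<in> carrier G" "H \<subseteq> carrier G" "\<And>h. h \<in> H \<Longrightarrow> g \<otimes> h = h \<otimes> g"
  shows "g <# H #> inv g = H"
proof -
  have "\<And>h. h \<in> H \<Longrightarrow> g \<otimes> h \<otimes> inv g = h"
    using assms by (metis m_assoc r_inv r_one inv_closed subsetD)
  then show ?thesis unfolding l_coset_def r_coset_def by auto
qed

lemma TRM_pi:
  assumes "s permutes (UNIV::'n::finite set)"
  shows "TRM L s 1 \<in> (Aut_pi :: ('n pt \<Rightarrow> 'n pt) set)"
  using assms TRM_Aut[OF assms, of 1 L]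
  by (simp add: Aut_pi_def TRM_F F_def M_one T_pi R_pi)

lemma TRM_norm:
  assumes "s permutes (UNIV::'n::finite set)"
  shows "TRM L s 1 \<in> normalizer AutGrp (frakM :: ('n pt \<Rightarrow> 'n pt) set)"
proof -
  have g: "TRM L s 1 \<in> carrier (AutGrp :: ('n pt \<Rightarrow> 'n pt) monoid)" using TRM_Aut[OF assms] by simp
  have H: "(frakM :: ('n pt \<Rightarrow> 'n pt) set) \<subseteq> carrier AutGrp"
    unfolding frakM_eq using TRM_Aut[OF permutes_id] by auto
  have "TRM L s 1 <#\<^bsub>AutGrp\<^esub> frakM #>\<^bsub>AutGrp\<^esub> inv\<^bsub>AutGrp\<^esub> (TRM L s 1) = (frakM :: ('n pt \<Rightarrow> 'n pt) set)"
  proof (rule group.conj_commuting[OF group_AutGrp g H])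
    fix h :: "'n pt \<Rightarrow> 'n pt" assume "h \<in> frakM"
    then obtain c where h: "h = TRM {} id c" "c \<noteq> 0" unfolding frakM_eq by blast
    show "TRM L s 1 \<otimes>\<^bsub>AutGrp\<^esub> h = h \<otimes>\<^bsub>AutGrp\<^esub> TRM L s 1"
      unfolding h(1) AutGrp_mult using h(2) assms by (simp add: TRM_comp permutes_id)
  qed
  then show ?thesis using g H unfolding normalizer_def stabilizer_def by simp
qed

lemma GN_sub_frakG: "(GN :: (('n::finite) pt \<Rightarrow> 'n pt) set) \<subseteq> frakG"
proof
  fix g :: "'n pt \<Rightarrow> 'n pt" assume "g \<in> GN"
  then obtain L s c where g: "g = TRM L s c" "s permutes UNIV" "c \<noteq> 0" unfolding GN_eq by blast
  have "g = compose DN (TRM L s 1) (TRM {} id c)" using g by (simp add: TRM_comp permutes_id)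
  moreover have "TRM L s 1 \<in> (Aut_pi \<inter> normalizer AutGrp frakM :: ('n pt \<Rightarrow> 'n pt) set)"
    using TRM_pi[OF g(2)] TRM_norm[OF g(2)] by blast
  moreover have "TRM {} id c \<in> (frakM :: ('n pt \<Rightarrow> 'n pt) set)" using g(3) unfolding frakM_eq by blast
  ultimately show "g \<in> frakG" unfolding frakG_def set_mult_def AutGrp_mult by blast
qed



lemma half_notin_Ints: "(1/2::real) \<notin> \<int>"
proof
  assume "(1/2::real) \<in> \<int>"
  then obtain k where k: "(1/2::real) = real_of_int k" by (auto elim: Ints_cases)
  then have "real_of_int (2 * k) = 1" by simp
  then have "2 * k = 1" by linarith
  then show False by presburger
qed

lemma TRM_inj:
  assumes s: "s permutes (UNIV::'n::finite set)" and s': "s' permutes (UNIV::'n set)"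
    and c: "c \<noteq> 0" and c': "c' \<noteq> 0"
    and eq: "(TRM L s c :: 'n pt \<Rightarrow> 'n pt) = TRM L' s' c'"
  shows "L = L' \<and> s = s' \<and> c = c'"
proof -
  have Feq: "F L s c p = F L' s' c' p" if "p \<in> DN" for p :: "'n pt"
    using fun_cong[OF eq, of p] that by (simp add: TRM_F)
  define p0 where "p0 = ((1::complex), (0::complex^'n), (\<chi> l. (1/2::real)) :: real^'n)"
  have p0: "p0 \<in> DN" unfolding p0_def DN_iff using half_notin_Ints by simp
  have f0: "fst (F L s c p0) = c" "fst (F L' s' c' p0) = c'"
    unfolding p0_def by (simp_all add: F_def Tmap_eval Rmap_eval Mmap_eval Tr_def)
  have cc: "c = c'" using Feq[OF p0] f0 by simp
  have key: "s' m = s m \<and> (s m \<in> L \<longleftrightarrow> s m \<in> L')" for m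
  proof -
    define pm where "pm = ((1::complex), (\<chi> l. if l = m then (1::complex) else 0), (\<chi> l. (1/2::real)) :: real^'n)"
    have pm: "pm \<in> DN" unfolding pm_def DN_iff using half_notin_Ints by simp
    have v: "fst (snd (F L s c pm)) $ (s m) = fst (snd (F L' s' c' pm)) $ (s m)"
      using Feq[OF pm] by simp
    have ev1: "fst (snd (F L s c pm)) $ (s m) = (if s m \<in> L then -1 else 1) * c'"
      unfolding pm_def cc by (simp add: F_def Tmap_eval Rmap_eval Mmap_eval permutes_inverses(2)[OF s])
    have ev2: "fst (snd (F L' s' c' pm)) $ (s m) = (if s m \<in> L' then -1 else 1) * (c' * (if inv_into UNIV s' (s m) = m then 1 else 0))"
      unfolding pm_def by (simp add: F_def Tmap_eval Rmap_eval Mmap_eval)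
    have E: "(if s m \<in> L then -1 else 1) * c' = (if s m \<in> L' then -1 else 1) * (c' * (if inv_into UNIV s' (s m) = m then 1 else 0))"
      using v unfolding ev1 ev2 .
    have i: "inv_into UNIV s' (s m) = m"
    proof (rule ccontr)
      assume "inv_into UNIV s' (s m) \<noteq> m"
      then have "(if s m \<in> L then -1 else 1) * c' = 0" using E by simp
      then show False using c' by (simp split: if_splits)
    qed
    have sg: "(if s m \<in> L then -1 else 1) = (if s m \<in> L' then -1 else (1::complex))"
      using E i c' by simp
    have "s' m = s m" using i permutes_inverses(1)[OF s'] by metis
    moreover have "s m \<in> L \<longleftrightarrow> s m \<in> L'" using sg by (auto split: if_splits)
    ultimately show ?thesis by simp
  qed
  have "s = s'" using key by (simp add: fun_eq_iff)
  moreover have "L = L'"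
  proof (rule Set.set_eqI)
    fix l
    have "l = s (inv_into UNIV s l)" using permutes_inverses(1)[OF s] by simp
    then show "l \<in> L \<longleftrightarrow> l \<in> L'" using key[of "inv_into UNIV s l"] by metis
  qed
  ultimately show ?thesis using cc by simp
qed


lemma iso_sym_gen:
  assumes "h \<in> iso G H" and cl: "\<And>x y. x \<in> carrier G \<Longrightarrow> y \<in> carrier G \<Longrightarrow> x \<otimes>\<^bsub>G\<^esub> y \<in> carrier G"
  shows "inv_into (carrier G) h \<in> iso H G"
proof -
  have h: "h \<in> hom G H" "bij_betw h (carrier G) (carrier H)"
    using assms by (auto simp add: iso_def bij_betw_inv_into)
  then have HG: "bij_betw (inv_into (carrier G) h) (carrier H) (carrier G)"
    by (simp add: bij_betw_inv_into)
  have "inv_into (carrier G) h \<in> hom H G"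
    unfolding hom_def
  proof safe
    show *: "\<And>x. x \<in> carrier H \<Longrightarrow> inv_into (carrier G) h x \<in> carrier G"
      by (meson HG bij_betwE)
    show "inv_into (carrier G) h (x \<otimes>\<^bsub>H\<^esub> y) = inv_into (carrier G) h x \<otimes>\<^bsub>G\<^esub> inv_into (carrier G) h y"
      if "x \<in> carrier H" "y \<in> carrier H" for x y
    proof (rule inv_into_f_eq)
      show "inj_on h (carrier G)"
        using bij_betw_def h(2) by blast
      show "inv_into (carrier G) h x \<otimes>\<^bsub>G\<^esub> inv_into (carrier G) h y \<in> carrier G"
        using cl * that by blast
      show "h (inv_into (carrier G) h x \<otimes>\<^bsub>G\<^esub> inv_into (carrier G) h y) = x \<otimes>\<^bsub>H\<^esub> y"
        using h bij_betw_inv_into_right [of h] unfolding hom_def by (simp add: "*" that)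
    qed
  qed
  then show ?thesis
    by (simp add: Group.iso_def bij_betw_inv_into h)
qed

definition phi :: "(('n::finite \<Rightarrow> int) \<times> ('n \<Rightarrow> 'n)) \<times> complex \<Rightarrow> ('n pt \<Rightarrow> 'n pt)" where
  "phi x = TRM {l. fst (fst x) l = -1} (snd (fst x)) (snd x)"

lemma carrier_D: "carrier (signperm_grp \<times>\<times> Cstar_grp) =
   {(e, s). (\<forall>l. e l \<in> {1, -1}) \<and> s permutes (UNIV::'n::finite set)} \<times> (UNIV - {0})"
  by (simp add: DirProd_def signperm_grp_def Cstar_grp_def)

lemma mult_D: "((e1, s1), c1) \<otimes>\<^bsub>signperm_grp \<times>\<times> Cstar_grp\<^esub> ((e2, s2), c2)
   = (((\<lambda>l. e1 l * e2 (inv_into UNIV s1 l)), s1 \<circ> s2), c1 * c2)"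
  by (simp add: DirProd_def signperm_grp_def Cstar_grp_def)

lemma pm1: "a \<in> {1, -1::int} \<Longrightarrow> b \<in> {1, -1} \<Longrightarrow> (a * b = -1) = ((a = -1) \<noteq> (b = -1))"
  by auto

lemma pm1': "a \<in> {1, -1::int} \<Longrightarrow> b \<in> {1, -1} \<Longrightarrow> a * b \<in> {1, -1}"
  by auto

lemma closed_D:
  "x \<in> carrier (signperm_grp \<times>\<times> Cstar_grp) \<Longrightarrow> y \<in> carrier (signperm_grp \<times>\<times> Cstar_grp)
   \<Longrightarrow> x \<otimes>\<^bsub>signperm_grp \<times>\<times> Cstar_grp\<^esub> y \<in> carrier (signperm_grp \<times>\<times> (Cstar_grp :: complex monoid))"
proof -
  obtain e1 s1 c1 where xe: "x = ((e1, s1), c1)" by (metis prod.collapse)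
  obtain e2 s2 c2 where ye: "y = ((e2, s2), c2)" by (metis prod.collapse)
  assume "x \<in> carrier (signperm_grp \<times>\<times> Cstar_grp)" "y \<in> carrier (signperm_grp \<times>\<times> Cstar_grp)"
  then have a: "\<forall>l. e1 l \<in> {1, -1}" "\<forall>l. e2 l \<in> {1,-1}" "s1 permutes UNIV" "s2 permutes UNIV" "c1 \<noteq> 0" "c2 \<noteq> 0"
    unfolding xe ye carrier_D by auto
  have "\<forall>l. e1 l * e2 (inv_into UNIV s1 l) \<in> {1,-1}" using a(1,2) pm1' by blast
  then show ?thesis unfolding xe ye mult_D carrier_D using a by (simp add: permutes_compose)
qed

lemma signset:
  assumes e2: "\<forall>l. e2 l \<in> {1, -1::int}" and e1: "\<forall>l. e1 l \<in> {1, -1::int}" and s1: "s1 permutes (UNIV::'n set)"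
  shows "{l. e1 l * e2 (inv_into UNIV s1 l) = -1} = symdiff {l. e1 l = -1} (s1 ` {l::'n. e2 l = -1})"
proof -
  have mem: "\<And>l A. (l \<in> s1 ` A) = (inv_into UNIV s1 l \<in> A)"
    using s1 by (metis image_iff permutes_inverses(1) permutes_inverses(2))
  show ?thesis
    by (auto simp: symdiff_def mem pm1[OF e1[rule_format] e2[rule_format]] permutes_inverses(2)[OF s1])
qed

lemma phi_iso: "phi \<in> iso (signperm_grp \<times>\<times> Cstar_grp) ((AutGrp :: (('n::finite) pt \<Rightarrow> 'n pt) monoid)\<lparr>carrier := GN\<rparr>)"
proof -
  have inGN: "phi x \<in> (GN :: ('n pt \<Rightarrow> 'n pt) set)" if "x \<in> carrier (signperm_grp \<times>\<times> Cstar_grp)" for x :: "(('n \<Rightarrow> int) \<times> ('n \<Rightarrow> 'n)) \<times> complex"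
  proof -
    obtain e1 s1 c1 where xe: "x = ((e1, s1), c1)" by (metis prod.collapse)
    have "s1 permutes UNIV" "c1 \<noteq> 0" using that unfolding xe carrier_D by auto
    then show ?thesis unfolding GN_eq xe phi_def by auto
  qed
  have hom: "phi \<in> hom (signperm_grp \<times>\<times> Cstar_grp) ((AutGrp :: ('n pt \<Rightarrow> 'n pt) monoid)\<lparr>carrier := GN\<rparr>)"
    unfolding hom_def
  proof (intro CollectI conjI ballI Pi_I)
    fix x :: "(('n \<Rightarrow> int) \<times> ('n \<Rightarrow> 'n)) \<times> complex"
    assume "x \<in> carrier (signperm_grp \<times>\<times> Cstar_grp)"
    then show "phi x \<in> carrier ((AutGrp :: ('n pt \<Rightarrow> 'n pt) monoid)\<lparr>carrier := GN\<rparr>)" using inGN by simp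
  next
    fix x y :: "(('n \<Rightarrow> int) \<times> ('n \<Rightarrow> 'n)) \<times> complex"
    assume x: "x \<in> carrier (signperm_grp \<times>\<times> Cstar_grp)" and y: "y \<in> carrier (signperm_grp \<times>\<times> Cstar_grp)"
    obtain e1 s1 c1 where xe: "x = ((e1, s1), c1)" by (metis prod.collapse)
    obtain e2 s2 c2 where ye: "y = ((e2, s2), c2)" by (metis prod.collapse)
    have h1: "\<forall>l. e1 l \<in> {1, -1}" "s1 permutes UNIV" "c1 \<noteq> 0" using x unfolding xe carrier_D by auto
    have h2: "\<forall>l. e2 l \<in> {1, -1}" "s2 permutes UNIV" "c2 \<noteq> 0" using y unfolding ye carrier_D by auto
    show "phi (x \<otimes>\<^bsub>signperm_grp \<times>\<times> Cstar_grp\<^esub> y) = phi x \<otimes>\<^bsub>(AutGrp :: ('n pt \<Rightarrow> 'n pt) monoid)\<lparr>carrier := GN\<rparr>\<^esub> phi y"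
      unfolding xe ye mult_D phi_def
      using h1 h2 by (simp add: TRM_comp signset)
  qed
  have inj: "inj_on phi (carrier (signperm_grp \<times>\<times> Cstar_grp) :: ((('n \<Rightarrow> int) \<times> ('n \<Rightarrow> 'n)) \<times> complex) set)"
  proof (rule inj_onI)
    fix x y :: "(('n \<Rightarrow> int) \<times> ('n \<Rightarrow> 'n)) \<times> complex"
    assume x: "x \<in> carrier (signperm_grp \<times>\<times> Cstar_grp)" and y: "y \<in> carrier (signperm_grp \<times>\<times> Cstar_grp)"
      and eq: "phi x = phi y"
    obtain e1 s1 c1 where xe: "x = ((e1, s1), c1)" by (metis prod.collapse)
    obtain e2 s2 c2 where ye: "y = ((e2, s2), c2)" by (metis prod.collapse)
    have h1: "\<forall>l. e1 l \<in> {1, -1}" "s1 permutes UNIV" "c1 \<noteq> 0" using x unfolding xe carrier_D by auto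
    have h2: "\<forall>l. e2 l \<in> {1, -1}" "s2 permutes UNIV" "c2 \<noteq> 0" using y unfolding ye carrier_D by auto
    have "{l. e1 l = -1} = {l. e2 l = -1} \<and> s1 = s2 \<and> c1 = c2"
      using TRM_inj[OF h1(2) h2(2) h1(3) h2(3)] eq unfolding xe ye phi_def by simp
    moreover have "e1 = e2"
    proof
      fix l
      have "e1 l = -1 \<longleftrightarrow> e2 l = -1" using calculation by blast
      then show "e1 l = e2 l" using h1(1) h2(1) by (metis insert_iff singletonD)
    qed
    ultimately show "x = y" unfolding xe ye by simp
  qed
  have surj: "phi ` carrier (signperm_grp \<times>\<times> Cstar_grp) = (GN :: ('n pt \<Rightarrow> 'n pt) set)"
  proof (intro equalityI subsetI)
    fix g :: "'n pt \<Rightarrow> 'n pt" assume "g \<in> phi ` carrier (signperm_grp \<times>\<times> Cstar_grp)"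
    then show "g \<in> (GN :: ('n pt \<Rightarrow> 'n pt) set)" using inGN by blast
  next
    fix g :: "'n pt \<Rightarrow> 'n pt" assume "g \<in> GN"
    then obtain L s c where g: "g = TRM L s c" "s permutes UNIV" "c \<noteq> 0" unfolding GN_eq by blast
    let ?x = "(((\<lambda>l. if l \<in> L then -1 else 1) :: 'n \<Rightarrow> int, s), c)"
    have "?x \<in> carrier (signperm_grp \<times>\<times> Cstar_grp)" using g unfolding carrier_D by auto
    moreover have "phi ?x = g" unfolding phi_def g(1) by simp
    ultimately show "g \<in> phi ` carrier (signperm_grp \<times>\<times> Cstar_grp)" by (metis image_eqI)
  qed
  show ?thesis unfolding iso_def bij_betw_def using hom inj surj by simp
qed

lemma GN_iso: "((AutGrp :: (('n::finite) pt \<Rightarrow> 'n pt) monoid)\<lparr>carrier := GN\<rparr>) \<cong> DirProd (signperm_grp :: (('n \<Rightarrow> int) \<times> ('n \<Rightarrow> 'n)) monoid) Cstar_grp"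
  unfolding is_iso_def using iso_sym_gen[OF phi_iso closed_D] by blast


theorem proposition2:
  shows "(\<forall>L. restrict (Tmap L) DN \<in> (frakG :: ('n::finite pt \<Rightarrow> 'n pt) set))
    \<and> (\<forall>\<sigma>. \<sigma> permutes (UNIV::'n set) \<longrightarrow> restrict (Rmap \<sigma>) DN \<in> (frakG :: ('n pt \<Rightarrow> 'n pt) set))
    \<and> (\<forall>\<alpha>. \<alpha> \<noteq> 0 \<longrightarrow> restrict (Mmap \<alpha>) DN \<in> (frakG :: ('n pt \<Rightarrow> 'n pt) set))
    \<and> (\<forall>L1 L2 \<sigma>1 \<sigma>2 \<alpha>1 \<alpha>2. \<sigma>1 permutes (UNIV::'n set) \<longrightarrow> \<sigma>2 permutes (UNIV::'n set)
          \<longrightarrow> \<alpha>1 \<noteq> 0 \<longrightarrow> \<alpha>2 \<noteq> 0 \<longrightarrow>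
          compose DN (TRM L1 \<sigma>1 \<alpha>1) (TRM L2 \<sigma>2 \<alpha>2)
            = TRM (symdiff L1 (\<sigma>1 ` L2)) (\<sigma>1 \<circ> \<sigma>2) (\<alpha>1 * \<alpha>2))
    \<and> GN = {TRM L \<sigma> \<alpha> | L \<sigma> \<alpha>. \<sigma> permutes (UNIV::'n set) \<and> \<alpha> \<noteq> 0}
    \<and> subgroup (GN :: ('n pt \<Rightarrow> 'n pt) set) AutGrp
    \<and> (GN :: ('n pt \<Rightarrow> 'n pt) set) \<subseteq> frakG
    \<and> ((AutGrp :: ('n pt \<Rightarrow> 'n pt) monoid)\<lparr>carrier := GN\<rparr>) \<cong> DirProd (signperm_grp :: (('n \<Rightarrow> int) \<times> ('n \<Rightarrow> 'n)) monoid) Cstar_grp"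
  proof -
  have inG: "TRM L s c \<in> (frakG :: ('n pt \<Rightarrow> 'n pt) set)" if "s permutes UNIV" "c \<noteq> 0" for L s c
    using GN_sub_frakG that unfolding GN_eq by blast
  show ?thesis
  proof (intro conjI allI impI)
    fix L :: "'n set"
    show "restrict (Tmap L) DN \<in> (frakG :: ('n pt \<Rightarrow> 'n pt) set)"
      unfolding TRM_T by (rule inG) (simp_all add: permutes_id)
  next
    fix s :: "'n \<Rightarrow> 'n" assume "s permutes UNIV"
    then show "restrict (Rmap s) DN \<in> (frakG :: ('n pt \<Rightarrow> 'n pt) set)"
      unfolding TRM_R by (intro inG) simp_all
  next
    fix c :: complex assume "c \<noteq> 0"
    then show "restrict (Mmap c) DN \<in> (frakG :: ('n pt \<Rightarrow> 'n pt) set)"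
      unfolding TRM_M by (intro inG) (simp_all add: permutes_id)
  next
    fix L1 L2 :: "'n set" and s1 s2 :: "'n \<Rightarrow> 'n" and c1 c2 :: complex
    assume "s1 permutes UNIV" "s2 permutes UNIV" "c1 \<noteq> 0" "c2 \<noteq> 0"
    then show "compose DN (TRM L1 s1 c1) (TRM L2 s2 c2) = (TRM (symdiff L1 (s1 ` L2)) (s1 \<circ> s2) (c1 * c2) :: 'n pt \<Rightarrow> 'n pt)"
      by (simp add: TRM_comp)
  next
    show "GN = {TRM L s c | L s c. s permutes (UNIV::'n set) \<and> c \<noteq> 0}" by (rule GN_eq)
  next
    show "subgroup (GN :: ('n pt \<Rightarrow> 'n pt) set) AutGrp" unfolding GN_eq by (rule sub_G)
  next
    show "(GN :: ('n pt \<Rightarrow> 'n pt) set) \<subseteq> frakG" by (rule GN_sub_frakG)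
  next
    show "((AutGrp :: ('n pt \<Rightarrow> 'n pt) monoid)\<lparr>carrier := GN\<rparr>) \<cong> DirProd (signperm_grp :: (('n \<Rightarrow> int) \<times> ('n \<Rightarrow> 'n)) monoid) Cstar_grp"
      by (rule GN_iso)
  qed
qed

end
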